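(* Let $d\ge1$ and let $\alpha_1,\dots,\alpha_{\varphi(d)}$ be representatives of the reduced residue classes modulo $d$. Then for every integer $a$, $$\rho(a,d)\in\mathbb Q[\rho(\alpha_1,d),\dots,\rho(\alpha_{\varphi(d)-1},d)],$$ the subring of $\mathbb R$ generated over $\mathbb Q$ by $\rho(\alpha_1,d),\dots,\rho(\alpha_{\varphi(d)-1},d)$.
   Context: $\varphi$ is Euler's totient. For integers $a$ and $d\ge1$, $\rho(a,d)=A\sum_{t\ge1,\ t\equiv a\pmod d}r(t)$, where $A=\prod_p\bigl(1-\frac{1}{p(p-1)}\bigr)$ (product over primes) and $r(t)=\frac{1}{t^2}\prod_{p\mid t}\frac{p^2-1}{p^2-p-1}$. *)

theory Defs
  imports "HOL-Analysis.Analysis" "HOL-Number_Theory.Number_Theory"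
begin

definition artinA :: real where
  "artinA = (\<Prod>n. if prime n then 1 - 1 / (real n * (real n - 1)) else 1)"

definition rfun :: "nat \<Rightarrow> real" where
  "rfun t = 1 / (real t)^2 *
     (\<Prod>p\<in>prime_factors t. ((real p)^2 - 1) / ((real p)^2 - real p - 1))"

definition rho :: "int \<Rightarrow> nat \<Rightarrow> real" where
  "rho a d = artinA * (\<Sum>\<^sub>\<infinity> t \<in> {t::nat. t \<ge> 1 \<and> [int t = a] (mod int d)}. rfun t)"

inductive_set Qring :: "real set \<Rightarrow> real set" for S :: "real set" where
  rat: "q \<in> \<rat> \<Longrightarrow> q \<in> Qring S"
| gen: "x \<in> S \<Longrightarrow> x \<in> Qring S"
| add: "x \<in> Qring S \<Longrightarrow> y \<in> Qring S \<Longrightarrow> x + y \<in> Qring S"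
| mult: "x \<in> Qring S \<Longrightarrow> y \<in> Qring S \<Longrightarrow> x * y \<in> Qring S"

end

theory Submission
  imports Defs
begin

definition cp :: "nat \<Rightarrow> real" where
  "cp p = ((real p)^2 - 1) / ((real p)^2 - real p - 1)"

lemma rfun_alt: "rfun t = 1 / (real t)^2 * (\<Prod>p\<in>prime_factors t. cp p)"
  by (simp add: rfun_def cp_def)

lemma cp_pos: assumes "prime p" shows "cp p > 0"
proof -
  have p2: "real p \<ge> 2" using prime_ge_2_nat[OF assms] by simp
  have "(real p)^2 - real p - 1 > 0"
  proof -
    have "(real p)^2 - real p = real p * (real p - 1)" by (simp add: power2_eq_square algebra_simps)
    also have "\<dots> \<ge> 2 * 1" using p2 by (intro mult_mono) auto
    finally show ?thesis by linarith
  qed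
  moreover have "(real p)^2 - 1 > 0"
  proof -
    have "(real p)^2 \<ge> 2^2" using p2 by (intro power_mono) auto
    then show ?thesis by simp
  qed
  ultimately show ?thesis by (simp add: cp_def)
qed

lemma rfun_nonneg: "rfun t \<ge> 0"
  unfolding rfun_alt
  by (intro mult_nonneg_nonneg prod_nonneg) (auto intro: less_imp_le cp_pos dest: in_prime_factors_imp_prime)

lemma rfun_1 [simp]: "rfun 1 = 1"
  by (simp add: rfun_def)

lemma rfun_Suc0 [simp]: "rfun (Suc 0) = 1"
  by (simp add: rfun_def)

lemma rfun_eq0: "\<not> Suc 0 \<le> i \<Longrightarrow> rfun i = 0"
  by (cases i) (auto simp: rfun_def)

lemma rfun_0 [simp]: "rfun 0 = 0"
  by (simp add: rfun_def)

lemma rfun_mult: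
  assumes "coprime m n"
  shows "rfun (m * n) = rfun m * rfun n"
proof (cases "m = 0 \<or> n = 0")
  case True
  then show ?thesis using assms by auto
next
  case False
  then have m0: "m \<noteq> 0" and n0: "n \<noteq> 0" by auto
  have disj: "prime_factors m \<inter> prime_factors n = {}"
  proof (rule ccontr)
    assume "prime_factors m \<inter> prime_factors n \<noteq> {}"
    then obtain q where q: "q \<in> prime_factors m" "q \<in> prime_factors n" by blast
    then have "prime q" "q dvd m" "q dvd n" by (auto dest: in_prime_factors_imp_prime in_prime_factors_imp_dvd)
    then show False using assms
      by (metis coprime_common_divisor not_prime_unit)
  qed
  have "prime_factors (m * n) = prime_factors m \<union> prime_factors n"
    using m0 n0 by (rule prime_factors_product)
  then have "(\<Prod>p\<in>prime_factors (m*n). cp p) = (\<Prod>p\<in>prime_factors m. cp p) * (\<Prod>p\<in>prime_factors n. cp p)"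
    using disj by (simp add: prod.union_disjoint)
  then show ?thesis unfolding rfun_alt by (simp add: power_mult_distrib)
qed

lemma rfun_pp:
  assumes "prime p" "k \<ge> 1"
  shows "rfun (p ^ k) = cp p * (1 / (real p)^2) ^ k"
proof -
  have "prime_factors (p ^ k) = {p}"
    using assms by (simp add: prime_factors_power prime_prime_factors)
  then show ?thesis unfolding rfun_alt
    by (simp add: power_mult_distrib power_one_over flip: power_mult) (simp add: mult_ac power_mult)
qed

lemma cp_le_sqrt:
  assumes "prime p" "p \<noteq> 2"
  shows "cp p \<le> sqrt (real p)"
proof -
  have p3: "real p \<ge> 3" using prime_ge_2_nat[OF assms(1)] assms(2) by simp
  define x where "x = real p"
  have x3: "x \<ge> 3" using p3 x_def by simp
  have den: "x^2 - x - 1 > 0"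
  proof -
    have "x^2 - x = x * (x - 1)" by (simp add: power2_eq_square algebra_simps)
    also have "\<dots> \<ge> 3 * 2" using x3 by (intro mult_mono) auto
    finally show ?thesis by linarith
  qed
  have "(3*x+1)*(x-3) \<ge> 0" using x3 by (intro mult_nonneg_nonneg) auto
  then have "5 * (x^2 - 1) \<le> 8 * (x^2 - x - 1)" by (simp add: power2_eq_square algebra_simps)
  then have "cp p \<le> 8/5" using den unfolding cp_def x_def[symmetric] by (simp add: divide_le_eq)
  also have "8/5 \<le> sqrt 3" by (rule real_le_rsqrt) (simp add: power2_eq_square)
  also have "sqrt 3 \<le> sqrt x" using x3 by simp
  finally show ?thesis by (simp add: x_def)
qed

lemma prod_prime_factors_le:
  assumes "t \<ge> (1::nat)"
  shows "(\<Prod>p\<in>prime_factors t. p) \<le> t"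
proof -
  have "(\<Prod>p\<in>prime_factors t. p) \<le> (\<Prod>p\<in>prime_factors t. p ^ multiplicity p t)"
  proof (intro prod_mono conjI)
    fix p assume p: "p \<in> prime_factors t"
    then have "multiplicity p t \<ge> 1" using assms by (auto simp: prime_factors_multiplicity)
    moreover have "p \<ge> 1" using p by (auto dest!: in_prime_factors_imp_prime simp: prime_gt_0_nat Suc_le_eq)
    ultimately show "p \<le> p ^ multiplicity p t"
      by (metis power_increasing power_one_right)
  qed simp
  also have "\<dots> = t" using assms by (subst prod_prime_factors) auto
  finally show ?thesis .
qed

lemma prod_cp_le:
  assumes "t \<ge> (1::nat)"
  shows "(\<Prod>p\<in>prime_factors t. cp p) \<le> 3 * sqrt (real t)"
proof -
  define P where "P = prime_factors t"
  have fin: "finite P" by (simp add: P_def)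
  have cp0: "\<And>p. p \<in> P \<Longrightarrow> cp p \<ge> 0" by (auto simp: P_def intro: less_imp_le cp_pos dest: in_prime_factors_imp_prime)
  have A: "(\<Prod>p\<in>P - {2}. cp p) \<le> (\<Prod>p\<in>P - {2}. sqrt (real p))"
    using cp0 by (intro prod_mono) (auto simp: P_def intro: cp_le_sqrt dest: in_prime_factors_imp_prime)
  have B: "(\<Prod>p\<in>P - {2}. sqrt (real p)) \<le> (\<Prod>p\<in>P. sqrt (real p))"
  proof (cases "2 \<in> P")
    case True
    have "(\<Prod>p\<in>P. sqrt (real p)) = sqrt 2 * (\<Prod>p\<in>P - {2}. sqrt (real p))"
      using True fin by (simp add: prod.remove)
    moreover have "(\<Prod>p\<in>P - {2}. sqrt (real p)) \<ge> 0" by (intro prod_nonneg) auto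
    ultimately show ?thesis by (simp add: mult_le_cancel_right1 order_trans[OF _ mult_right_mono[of 1 "sqrt 2"]])
  qed simp
  have C: "(\<Prod>p\<in>P. cp p) \<le> 3 * (\<Prod>p\<in>P - {2}. cp p)"
  proof (cases "2 \<in> P")
    case True
    have "cp 2 = 3" by (simp add: cp_def)
    then show ?thesis using True fin by (simp add: prod.remove)
  next
    case False
    have "(\<Prod>p\<in>P - {2}. cp p) \<ge> 0" using cp0 by (intro prod_nonneg) auto
    then show ?thesis using False by simp
  qed
  have D: "(\<Prod>p\<in>P. sqrt (real p)) = sqrt (real (\<Prod>p\<in>P. p))"
    by (induction P rule: infinite_finite_induct) (auto simp: real_sqrt_mult)
  have E: "sqrt (real (\<Prod>p\<in>P. p)) \<le> sqrt (real t)"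
  proof -
    have "real (\<Prod>p\<in>P. p) \<le> real t"
      using prod_prime_factors_le[OF assms] unfolding P_def by (simp only: of_nat_le_iff)
    then show ?thesis by (simp only: real_sqrt_le_iff)
  qed
  from A B C D E show ?thesis unfolding P_def[symmetric] by linarith
qed


lemma rfun_le:
  assumes "t \<ge> (1::nat)"
  shows "rfun t \<le> 3 * real t powr (-3/2)"
proof -
  have t0: "real t > 0" using assms by simp
  have "rfun t \<le> 1 / (real t)^2 * (3 * sqrt (real t))"
    unfolding rfun_alt using prod_cp_le[OF assms] by (intro mult_left_mono) auto
  also have "\<dots> = 3 * (real t powr (1/2) / (real t)^2)"
    using t0 by (simp add: powr_half_sqrt)
  also have "real t powr (1/2) / (real t)^2 = real t powr (-3/2)"
  proof -
    have "real t powr (-3/2) = real t powr (1/2 - 2)" by simp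
    also have "\<dots> = real t powr (1/2) / real t powr 2" by (rule powr_diff)
    also have "real t powr 2 = (real t)^2" using t0 by (simp add: powr_numeral)
    finally show ?thesis by simp
  qed
  finally show ?thesis .
qed

lemma rfun_summable_UNIV: "rfun summable_on UNIV"
proof -
  have "summable (\<lambda>n. 3 * real n powr (-3/2))"
    by (intro summable_mult) (simp add: summable_real_powr_iff)
  then have "summable rfun"
  proof (rule summable_comparison_test'[where N=1])
    fix n :: nat assume "n \<ge> 1"
    then show "norm (rfun n) \<le> 3 * real n powr (-3/2)" using rfun_le rfun_nonneg by simp
  qed
  then show ?thesis using rfun_nonneg by (simp add: summable_on_UNIV_nonneg_real_iff)
qed

lemma rfun_summable: "rfun summable_on A"
  using rfun_summable_UNIV by (rule summable_on_subset_banach) simp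

lemma rfun_summable_comp: "(\<lambda>x. rfun (f x)) summable_on A" if "inj_on f A"
  using rfun_summable[of "f ` A"] that by (simp add: summable_on_reindex o_def)

lemma pk_inj:
  fixes p :: nat
  assumes "prime p" "\<forall>s\<in>T. \<not> p dvd s"
  shows "inj_on (\<lambda>(k,s). p^k * s) (K \<times> T)"
proof (rule inj_onI, clarify)
  fix k s k' s' assume A: "k \<in> K" "s \<in> T" "k' \<in> K" "s' \<in> T" and eq: "p^k * s = p^k' * s'"
  have p0: "p \<noteq> 0" using assms by auto
  have "multiplicity p (p^k * s) = k" using assms A p0 by (intro multiplicity_decomposeI) auto
  moreover have "multiplicity p (p^k' * s') = k'" using assms A p0 by (intro multiplicity_decomposeI) auto
  ultimately have "k = k'" using eq by simp
  then show "k = k' \<and> s = s'" using eq p0 by simp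
qed

lemma infsum_pk_product:
  fixes p :: nat
  assumes "prime p" "\<forall>s\<in>T. \<not> p dvd s"
  shows "infsum rfun ((\<lambda>(k,s). p^k * s) ` (K \<times> T)) = (\<Sum>\<^sub>\<infinity>k\<in>K. rfun (p^k)) * infsum rfun T"
proof -
  let ?h = "\<lambda>(k,s). p^k * s"
  have inj: "inj_on ?h (K \<times> T)" by (rule pk_inj[OF assms])
  have eqf: "(rfun \<circ> ?h) x = (\<lambda>(k,s). rfun (p^k) * rfun s) x" if "x \<in> K \<times> T" for x
  proof -
    obtain k s where x0: "x = (k,s)" by (cases x)
    then have x: "x = (k,s)" "s \<in> T" using that by auto
    have "coprime p s" using assms x by (simp add: prime_imp_coprime)
    then have "coprime (p^k) s" by simp
    then show ?thesis using x by (simp add: rfun_mult)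
  qed
  have "infsum rfun (?h ` (K \<times> T)) = infsum (rfun \<circ> ?h) (K \<times> T)"
    using inj by (rule infsum_reindex)
  also have "\<dots> = infsum (\<lambda>(k,s). rfun (p^k) * rfun s) (K \<times> T)"
    using eqf by (rule infsum_cong)
  also have "\<dots> = infsum (\<lambda>k. infsum (\<lambda>s. rfun (p^k) * rfun s) T) K"
  proof (rule infsum_Sigma'_banach[symmetric])
    have "(rfun \<circ> ?h) summable_on (K \<times> T)"
      using rfun_summable[of "?h ` (K \<times> T)"] inj by (simp add: summable_on_reindex)
    then show "(\<lambda>(k,s). rfun (p^k) * rfun s) summable_on (K \<times> T)"
      using eqf summable_on_cong by blast
  qed
  also have "\<dots> = infsum (\<lambda>k. rfun (p^k) * infsum rfun T) K"
    by (simp add: infsum_cmult_right')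
  also have "\<dots> = (\<Sum>\<^sub>\<infinity>k\<in>K. rfun (p^k)) * infsum rfun T"
    by (simp add: infsum_cmult_left')
  finally show ?thesis .
qed


definition Sm :: "nat set \<Rightarrow> nat set" where
  "Sm P = {t. t \<ge> 1 \<and> prime_factors t \<subseteq> P}"

definition ep :: "nat \<Rightarrow> real" where
  "ep p = 1 + 1 / ((real p)^2 - real p - 1)"

lemma Sm_empty: "Sm {} = {1}"
proof -
  have "t = 1" if "t \<ge> 1" "prime_factors t = {}" for t :: nat
  proof (rule ccontr)
    assume "t \<noteq> 1"
    then obtain q where "prime q" "q dvd t" using prime_factor_nat by blast
    moreover have "t \<noteq> 0" using that(1) by auto
    ultimately have "q \<in> prime_factors t" by (simp add: in_prime_factors_iff)
    then show False using that(2) by simp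
  qed
  then show ?thesis by (auto simp: Sm_def)
qed

lemma Sm_notdvd: "prime p \<Longrightarrow> p \<notin> P \<Longrightarrow> s \<in> Sm P \<Longrightarrow> \<not> p dvd s"
  by (auto simp: Sm_def in_prime_factors_iff)

lemma Sm_insert:
  assumes "prime p" "p \<notin> P"
  shows "Sm (insert p P) = (\<lambda>(k,s). p^k * s) ` (UNIV \<times> Sm P)"
proof (intro equalityI subsetI)
  fix t assume t: "t \<in> Sm (insert p P)"
  have t1: "t \<ge> 1" using t by (simp add: Sm_def)
  obtain y where y: "t = p ^ multiplicity p t * y" "\<not> p dvd y"
    by (rule multiplicity_decompose'[where x=t and p=p]) (use t1 assms(1) in auto)
  then have y1: "y \<ge> 1" using y by (cases y) auto
  have "prime_factors y \<subseteq> P"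
  proof
    fix q assume q: "q \<in> prime_factors y"
    then have "prime q" "q dvd y" by (auto simp: in_prime_factors_iff)
    then have "q dvd t" using y by (metis dvd_mult)
    then have "q \<in> prime_factors t" using \<open>prime q\<close> t1 by (auto simp: in_prime_factors_iff)
    then have "q \<in> insert p P" using t by (auto simp: Sm_def)
    moreover have "q \<noteq> p" using \<open>q dvd y\<close> y by auto
    ultimately show "q \<in> P" by auto
  qed
  then have "y \<in> Sm P" using y1 by (simp add: Sm_def)
  then show "t \<in> (\<lambda>(k,s). p^k * s) ` (UNIV \<times> Sm P)" using y by force
next
  fix t assume "t \<in> (\<lambda>(k,s). p^k * s) ` (UNIV \<times> Sm P)"
  then obtain k s where t: "t = p^k * s" "s \<in> Sm P" by auto
  have p0: "p > 0" using assms by (simp add: prime_gt_0_nat)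
  have s1: "s \<ge> 1" using t by (simp add: Sm_def)
  have "t \<ge> 1" using t s1 p0 by simp
  moreover have "prime_factors t \<subseteq> insert p P"
  proof
    fix q assume q: "q \<in> prime_factors t"
    then have "prime q" "q dvd p^k * s" using t by (auto simp: in_prime_factors_iff)
    then have "q dvd p^k \<or> q dvd s" by (simp add: prime_dvd_mult_iff)
    then show "q \<in> insert p P"
    proof
      assume "q dvd p^k"
      then have "q dvd p" using \<open>prime q\<close> prime_dvd_power by blast
      then have "q = p" using \<open>prime q\<close> assms(1) primes_dvd_imp_eq by blast
      then show ?thesis by simp
    next
      assume "q dvd s"
      then have "q \<in> prime_factors s" using \<open>prime q\<close> s1 by (auto simp: in_prime_factors_iff)
      then show ?thesis using t by (auto simp: Sm_def)
    qed
  qed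
  ultimately show "t \<in> Sm (insert p P)" by (simp add: Sm_def)
qed

lemma geom_pk:
  assumes "prime p"
  shows "(\<Sum>\<^sub>\<infinity>k\<in>UNIV. rfun (p^k)) = ep p"
proof -
  define x where "x = 1 / (real p)^2"
  have p2: "real p \<ge> 2" using prime_ge_2_nat[OF assms] by simp
  have pp: "(real p)^2 \<ge> 4" using power_mono[OF p2, of 2] by simp
  have x: "norm x < 1" "x > 0" using pp prime_gt_0_nat[OF assms] by (auto simp: x_def divide_less_eq)
  have "((\<lambda>k. cp p * x^k) has_sum (cp p * (x / (1 - x)))) {1..}"
    by (intro has_sum_cmult_right has_sum_geometric_from_1 x)
  then have "((\<lambda>k. rfun (p^k)) has_sum (cp p * (x / (1 - x)))) {1..}"
    by (rule has_sum_cong[THEN iffD1, rotated]) (simp add: rfun_pp[OF assms] x_def)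
  then have "((\<lambda>k. rfun (p^k)) has_sum (rfun (p^0) + cp p * (x / (1 - x)))) (insert 0 {1..})"
    by (intro has_sum_insert) auto
  moreover have "insert 0 {1..} = (UNIV :: nat set)" by auto
  ultimately have hs: "((\<lambda>k. rfun (p^k)) has_sum (1 + cp p * (x / (1 - x)))) UNIV" by simp
  have den: "(real p)^2 - real p - 1 > 0"
  proof -
    have "(real p)^2 - real p = real p * (real p - 1)" by (simp add: power2_eq_square algebra_simps)
    also have "\<dots> \<ge> 2 * 1" using p2 by (intro mult_mono) auto
    finally show ?thesis by linarith
  qed
  have "cp p * (x / (1 - x)) = 1 / ((real p)^2 - real p - 1)"
  proof -
    have q: "(real p)^2 - 1 \<noteq> 0" "(real p)^2 \<noteq> 0" using pp by (auto simp del: of_nat_eq_0_iff)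
    have "x / (1 - x) = 1 / ((real p)^2 - 1)"
      unfolding x_def using q by (simp add: field_simps)
    then show ?thesis using q unfolding cp_def by simp
  qed
  then show ?thesis using hs by (simp add: infsumI ep_def)
qed

lemma euler_finite:
  assumes "finite P" "\<forall>p\<in>P. prime p"
  shows "infsum rfun (Sm P) = (\<Prod>p\<in>P. ep p)"
  using assms
proof (induction P rule: finite_induct)
  case empty
  then show ?case by (simp add: Sm_empty)
next
  case (insert p P)
  have "infsum rfun (Sm (insert p P)) = infsum rfun ((\<lambda>(k,s). p^k * s) ` (UNIV \<times> Sm P))"
    using insert by (simp add: Sm_insert)
  also have "\<dots> = (\<Sum>\<^sub>\<infinity>k\<in>UNIV. rfun (p^k)) * infsum rfun (Sm P)"
  proof (rule infsum_pk_product)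
    show "prime p" using insert by simp
    then show "\<forall>s\<in>Sm P. \<not> p dvd s" using Sm_notdvd[of p P] insert by blast
  qed
  also have "\<dots> = ep p * (\<Prod>p\<in>P. ep p)" using insert by (simp add: geom_pk)
  finally show ?case using insert by simp
qed


definition fa :: "nat \<Rightarrow> real" where
  "fa p = 1 - 1 / (real p * (real p - 1))"

lemma fa_ep: assumes "prime p" shows "fa p * ep p = 1"
proof -
  have p2: "real p \<ge> 2" using prime_ge_2_nat[OF assms] by simp
  have e: "real p * (real p - 1) = (real p)^2 - real p" by (simp add: power2_eq_square algebra_simps)
  have den: "(real p)^2 - real p - 1 > 0"
  proof -
    have "real p * (real p - 1) \<ge> 2 * 1" using p2 by (intro mult_mono) auto
    then show ?thesis using e by linarith
  qed
  have d2: "(real p)^2 - real p \<noteq> 0" using den by linarith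
  have gen: "(1 - 1/y) * (1 + 1/(y - 1)) = 1" if "y \<noteq> 0" "y - 1 \<noteq> 0" for y :: real
    using that by (simp add: field_simps)
  show ?thesis unfolding fa_def ep_def e using den d2 gen[of "(real p)^2 - real p"] by simp
qed

lemma ep_pos: assumes "prime p" shows "ep p > 0"
proof -
  have "fa p * ep p = 1" using fa_ep[OF assms] .
  moreover have "ep p \<ge> 0"
  proof -
    have p2: "real p \<ge> 2" using prime_ge_2_nat[OF assms] by simp
    have "(real p)^2 - real p - 1 > 0"
    proof -
      have "(real p)^2 - real p = real p * (real p - 1)" by (simp add: power2_eq_square algebra_simps)
      also have "\<dots> \<ge> 2 * 1" using p2 by (intro mult_mono) auto
      finally show ?thesis by linarith
    qed
    then show ?thesis unfolding ep_def by simp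
  qed
  ultimately show ?thesis by (cases "ep p = 0") auto
qed

lemma artin_S: "artinA * infsum rfun {t. t \<ge> 1} = 1"
proof -
  define S where "S = infsum rfun {t. t \<ge> 1}"
  define PN where "PN N = {p. prime p \<and> p \<le> N}" for N :: nat
  define E where "E N = infsum rfun (Sm (PN N))" for N
  have finPN: "finite (PN N)" for N unfolding PN_def by (rule finite_subset[of _ "{..N}"]) auto
  have E_eq: "E N = (\<Prod>p\<in>PN N. ep p)" for N
    unfolding E_def using finPN by (intro euler_finite) (auto simp: PN_def)
  have Sm_sub: "Sm (PN N) \<subseteq> {t. t \<ge> 1}" for N by (auto simp: Sm_def)
  have low_sub: "{1..N} \<subseteq> Sm (PN N)" for N
  proof
    fix t assume t: "t \<in> {1..N}"
    have "prime_factors t \<subseteq> PN N"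
    proof
      fix q assume "q \<in> prime_factors t"
      then have "prime q" "q dvd t" by (auto simp: in_prime_factors_iff)
      then have "q \<le> t" using t by (auto intro: dvd_imp_le)
      then show "q \<in> PN N" using t \<open>prime q\<close> by (auto simp: PN_def)
    qed
    then show "t \<in> Sm (PN N)" using t by (auto simp: Sm_def)
  qed
  have sum_eq: "sum rfun {..N} = sum rfun {1..N}" for N
    by (rule sum.mono_neutral_right) (auto simp: rfun_eq0)
  have lower: "sum rfun {..N} \<le> E N" for N
    unfolding sum_eq E_def using low_sub rfun_nonneg
    by (intro finite_sum_le_infsum rfun_summable) auto
  have upper: "E N \<le> S" for N
    unfolding E_def S_def using Sm_sub rfun_nonneg
    by (intro infsum_mono2 rfun_summable) auto
  have SU: "infsum rfun UNIV = S"
  proof -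
    have u: "UNIV = insert 0 {t::nat. t \<ge> 1}" by auto
    have "infsum rfun (insert 0 {t::nat. t \<ge> 1}) = rfun 0 + S" unfolding S_def
      by (rule infsum_insert[OF rfun_summable]) simp
    then have "infsum rfun UNIV = rfun 0 + S" by (subst u)
    then show ?thesis by simp
  qed
  have "rfun sums S"
    using has_sum_imp_sums[of rfun S] has_sum_infsum[OF rfun_summable_UNIV] SU by simp
  then have "(\<lambda>n. sum rfun {..<n}) \<longlonglongrightarrow> S" by (simp add: sums_def)
  then have "(\<lambda>n. sum rfun {..<Suc n}) \<longlonglongrightarrow> S" by (rule LIMSEQ_Suc)
  then have L1: "(\<lambda>n. sum rfun {..n}) \<longlonglongrightarrow> S" by (simp add: lessThan_Suc_atMost)
  have ES: "E \<longlonglongrightarrow> S"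
    by (rule tendsto_sandwich[OF _ _ L1 tendsto_const]) (use lower upper in auto)
  have S1: "S \<ge> 1"
  proof -
    have "sum rfun {1} \<le> S" unfolding S_def using rfun_nonneg
      by (intro finite_sum_le_infsum rfun_summable) auto
    then show ?thesis by simp
  qed
  define f where "f n = (if prime n then 1 - 1 / (real n * (real n - 1)) else 1)" for n :: nat
  have Epos: "E N > 0" for N unfolding E_eq by (intro prod_pos) (auto simp: PN_def intro: ep_pos)
  have partial: "(\<Prod>i\<le>N. f i) = 1 / E N" for N
  proof -
    have "(\<Prod>i\<le>N. f i) = (\<Prod>p\<in>PN N. fa p)"
      unfolding f_def fa_def PN_def by (subst prod.inter_filter[symmetric]) (auto intro: prod.cong)
    moreover have "(\<Prod>p\<in>PN N. fa p) * E N = 1"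
      unfolding E_eq prod.distrib[symmetric] by (intro prod.neutral) (auto simp: PN_def fa_ep)
    ultimately show ?thesis using Epos[of N] by (simp add: field_simps)
  qed
  have "(\<lambda>N. 1 / E N) \<longlonglongrightarrow> 1 / S"
    using S1 by (intro tendsto_divide ES tendsto_const) auto
  then have "raw_has_prod f 0 (1 / S)"
    unfolding raw_has_prod_def using partial S1 by simp
  then have "f has_prod (1 / S)" by (simp add: has_prod_def)
  then have "artinA = 1 / S"
    unfolding artinA_def f_def[symmetric] by (simp add: has_prod_unique[symmetric])
  moreover have "S \<noteq> 0" using S1 by simp
  ultimately have "artinA * S = 1" by (simp add: field_simps)
  then show ?thesis by (simp only: S_def)
qed


lemma geom_summable: "(\<lambda>k. (x::real)^k) summable_on A" if "0 \<le> x" "x < 1"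
proof -
  have "(\<lambda>k. x^k) summable_on UNIV"
    using that by (subst summable_on_UNIV_nonneg_real_iff) (auto intro: summable_geometric)
  then show ?thesis by (rule summable_on_subset_banach) simp
qed

lemma periodic_geom_rat:
  fixes x :: real and K :: "nat set"
  assumes x: "x \<in> \<rat>" "0 \<le> x" "x < 1" and L: "L > 0"
    and per: "\<And>k. k \<ge> N \<Longrightarrow> k \<in> K \<longleftrightarrow> k + L \<in> K"
  shows "(\<Sum>\<^sub>\<infinity>k\<in>K. x^k) \<in> \<rat>"
proof -
  define A where "A = K \<inter> {N..}"
  define sA where "sA = (\<Sum>\<^sub>\<infinity>k\<in>A. x^k)"
  have sm: "\<And>B. (\<lambda>k. x^k) summable_on B" using geom_summable x by blast
  have split1: "K = (K \<inter> {..<N}) \<union> A" by (auto simp: A_def)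
  have "(\<Sum>\<^sub>\<infinity>k\<in>K. x^k) = (\<Sum>\<^sub>\<infinity>k\<in>K \<inter> {..<N}. x^k) + sA"
    unfolding sA_def by (subst split1, rule infsum_Un_disjoint) (auto simp: A_def sm)
  also have "(\<Sum>\<^sub>\<infinity>k\<in>K \<inter> {..<N}. x^k) = (\<Sum>k\<in>K \<inter> {..<N}. x^k)" by simp
  finally have e1: "(\<Sum>\<^sub>\<infinity>k\<in>K. x^k) = (\<Sum>k\<in>K \<inter> {..<N}. x^k) + sA" .
  have split2: "A = (K \<inter> {N..<N+L}) \<union> ((\<lambda>k. k + L) ` A)"
  proof (intro equalityI subsetI)
    fix k assume k: "k \<in> A"
    show "k \<in> (K \<inter> {N..<N+L}) \<union> ((\<lambda>k. k + L) ` A)"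
    proof (cases "k < N + L")
      case True then show ?thesis using k by (auto simp: A_def)
    next
      case False
      then have "k - L \<ge> N" by simp
      moreover have "k - L + L = k" using False by simp
      ultimately have "k - L \<in> K" using per[of "k - L"] k by (auto simp: A_def)
      then have "k - L \<in> A" using \<open>k - L \<ge> N\<close> by (simp add: A_def)
      then show ?thesis using \<open>k - L + L = k\<close> by (metis UnCI image_eqI)
    qed
  next
    fix k assume "k \<in> (K \<inter> {N..<N+L}) \<union> ((\<lambda>k. k + L) ` A)"
    then show "k \<in> A"
    proof
      assume "k \<in> K \<inter> {N..<N+L}" then show ?thesis by (auto simp: A_def)
    next
      assume "k \<in> (\<lambda>k. k + L) ` A"
      then obtain j where j: "j \<in> A" "k = j + L" by auto
      then show ?thesis using per[of j] by (auto simp: A_def)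
    qed
  qed
  have disj: "(K \<inter> {N..<N+L}) \<inter> ((\<lambda>k. k + L) ` A) = {}" by (auto simp: A_def)
  have "sA = (\<Sum>\<^sub>\<infinity>k\<in>K \<inter> {N..<N+L}. x^k) + (\<Sum>\<^sub>\<infinity>k\<in>(\<lambda>k. k + L) ` A. x^k)"
    unfolding sA_def by (subst split2, rule infsum_Un_disjoint) (use disj sm in auto)
  also have "(\<Sum>\<^sub>\<infinity>k\<in>(\<lambda>k. k + L) ` A. x^k) = (\<Sum>\<^sub>\<infinity>k\<in>A. x^(k + L))"
    by (subst infsum_reindex) (auto simp: o_def)
  also have "\<dots> = x^L * sA" unfolding sA_def
    by (simp add: power_add infsum_cmult_left')
  finally have e2: "sA = (\<Sum>k\<in>K \<inter> {N..<N+L}. x^k) + x^L * sA" by simp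
  have xl: "x^L < 1" using x L by (simp add: power_less_one_iff)
  have "sA * (1 - x^L) = (\<Sum>k\<in>K \<inter> {N..<N+L}. x^k)" using e2 by (simp add: algebra_simps)
  then have "sA = (\<Sum>k\<in>K \<inter> {N..<N+L}. x^k) / (1 - x^L)" using xl by (simp add: field_simps)
  then have "sA \<in> \<rat>" using x by (auto intro!: Rats_divide Rats_diff Rats_power Rats_sum)
  moreover have "(\<Sum>k\<in>K \<inter> {..<N}. x^k) \<in> \<rat>" using x by (auto intro!: Rats_sum Rats_power)
  ultimately show ?thesis using e1 by simp
qed

lemma cp_rat: "cp p \<in> \<rat>"
  unfolding cp_def by (intro Rats_divide Rats_diff Rats_power) auto

definition Tc :: "nat \<Rightarrow> nat \<Rightarrow> nat set" where
  "Tc d s = {t. t \<ge> 1 \<and> [t = s] (mod d)}"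

definition X :: "nat \<Rightarrow> nat \<Rightarrow> real" where
  "X d s = infsum rfun (Tc d s)"

definition Kset :: "nat \<Rightarrow> nat \<Rightarrow> nat \<Rightarrow> nat \<Rightarrow> nat set" where
  "Kset d p s \<tau> = {k. k \<ge> 1 \<and> [p^k * \<tau> = s] (mod d)}"

definition coef :: "nat \<Rightarrow> nat \<Rightarrow> nat \<Rightarrow> nat \<Rightarrow> real" where
  "coef d p s \<tau> = (\<Sum>\<^sub>\<infinity>k\<in>Kset d p s \<tau>. rfun (p^k))"

lemma coef_nonneg: "coef d p s \<tau> \<ge> 0"
  unfolding coef_def by (intro infsum_nonneg rfun_nonneg)

lemma power_mod_periodic:
  fixes p d :: nat
  assumes "d \<ge> 1"
  obtains N L where "L > 0" "\<And>k. k \<ge> N \<Longrightarrow> [p^(k+L) = p^k] (mod d)"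
proof -
  have "\<not> inj_on (\<lambda>i. p^i mod d) {..d}"
  proof (rule pigeonhole)
    have "(\<lambda>i. p^i mod d) ` {..d} \<subseteq> {..<d}" using assms by auto
    then have "card ((\<lambda>i. p^i mod d) ` {..d}) \<le> d" by (metis card_lessThan card_mono finite_lessThan)
    then show "card {..d} > card ((\<lambda>i. p^i mod d) ` {..d})" by simp
  qed
  then obtain i j where ij: "i \<le> d" "j \<le> d" "i \<noteq> j" "p^i mod d = p^j mod d"
    by (auto simp: inj_on_def)
  define a where "a = min i j"
  define b where "b = max i j"
  have ab: "a < b" "p^a mod d = p^b mod d" using ij by (auto simp: a_def b_def min_def max_def)
  show ?thesis
  proof (rule that[of "b - a" a])
    show "b - a > 0" using ab by simp
    fix k assume k: "k \<ge> a"
    have "p^(k + (b - a)) = p^(k - a) * p^b" using k ab by (simp flip: power_add)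
    moreover have "p^k = p^(k - a) * p^a" using k by (simp flip: power_add)
    moreover have "[p^(k - a) * p^b = p^(k - a) * p^a] (mod d)"
      using ab by (intro cong_scalar_left) (simp add: cong_def)
    ultimately show "[p^(k + (b - a)) = p^k] (mod d)" by simp
  qed
qed

lemma coef_rat:
  assumes "d \<ge> 1" "prime p"
  shows "coef d p s \<tau> \<in> \<rat>"
proof -
  obtain N L where L: "L > 0" and per: "\<And>k. k \<ge> N \<Longrightarrow> [p^(k+L) = p^k] (mod d)"
    using power_mod_periodic[OF assms(1)] by blast
  define x where "x = 1 / (real p)^2"
  have p2: "real p \<ge> 2" using prime_ge_2_nat[OF assms(2)] by simp
  have pp: "(real p)^2 \<ge> 4" using power_mono[OF p2, of 2] by simp
  have x: "x \<in> \<rat>" "0 \<le> x" "x < 1" using pp by (auto simp: x_def divide_less_eq)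
  have "coef d p s \<tau> = (\<Sum>\<^sub>\<infinity>k\<in>Kset d p s \<tau>. cp p * x^k)"
    unfolding coef_def x_def by (intro infsum_cong) (auto simp: Kset_def rfun_pp[OF assms(2)])
  also have "\<dots> = cp p * (\<Sum>\<^sub>\<infinity>k\<in>Kset d p s \<tau>. x^k)" by (simp add: infsum_cmult_right')
  finally have e: "coef d p s \<tau> = cp p * (\<Sum>\<^sub>\<infinity>k\<in>Kset d p s \<tau>. x^k)" .
  have "(\<Sum>\<^sub>\<infinity>k\<in>Kset d p s \<tau>. x^k) \<in> \<rat>"
  proof (rule periodic_geom_rat[OF x L])
    fix k assume k: "k \<ge> N + 1"
    have "[p^(k+L) * \<tau> = p^k * \<tau>] (mod d)" using per[of k] k by (intro cong_scalar_right) auto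
    then have "[p^(k+L) * \<tau> = s] (mod d) \<longleftrightarrow> [p^k * \<tau> = s] (mod d)"
      by (meson cong_sym cong_trans)
    then show "k \<in> Kset d p s \<tau> \<longleftrightarrow> k + L \<in> Kset d p s \<tau>" using k by (auto simp: Kset_def)
  qed
  then show ?thesis using e cp_rat by simp
qed


lemma Tc_notdvd:
  assumes "p dvd d" "\<not> p dvd \<tau>" "s \<in> Tc d \<tau>"
  shows "\<not> p dvd s"
proof -
  have "[s = \<tau>] (mod p)" using assms by (auto simp: Tc_def intro: cong_dvd_modulus_nat)
  then show ?thesis using assms(2) cong_dvd_iff by blast
qed

lemma peel:
  assumes d: "d \<ge> 1" and p: "prime p" "p dvd d" "p dvd \<sigma>"
  shows "X d \<sigma> = (\<Sum>\<tau>\<in>{\<tau>. \<tau> < d \<and> \<not> p dvd \<tau>}. coef d p \<sigma> \<tau> * X d \<tau>)"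
proof -
  define D where "D = {\<tau>. \<tau> < d \<and> \<not> p dvd \<tau>}"
  define W where "W \<tau> = (\<lambda>(k,s). p^k * s) ` (Kset d p \<sigma> \<tau> \<times> Tc d \<tau>)" for \<tau>
  have finD: "finite D" unfolding D_def by (rule finite_subset[of _ "{..<d}"]) auto
  have p0: "p > 0" using p by (simp add: prime_gt_0_nat)
  have nd: "\<forall>s\<in>Tc d \<tau>. \<not> p dvd s" if "\<tau> \<in> D" for \<tau>
    using that Tc_notdvd[OF p(2)] by (auto simp: D_def)
  have cover: "Tc d \<sigma> = (\<Union>\<tau>\<in>D. W \<tau>)"
  proof (intro equalityI subsetI)
    fix t assume t: "t \<in> Tc d \<sigma>"
    then have t1: "t \<ge> 1" and tc: "[t = \<sigma>] (mod d)" by (auto simp: Tc_def)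
    have "[t = \<sigma>] (mod p)" using tc p(2) by (rule cong_dvd_modulus_nat)
    then have pt: "p dvd t" using p(3) cong_dvd_iff by blast
    obtain y where y: "t = p ^ multiplicity p t * y" "\<not> p dvd y"
      by (rule multiplicity_decompose'[where x=t and p=p]) (use t1 p(1) in auto)
    define k where "k = multiplicity p t"
    have "multiplicity p t > 0" using prime_multiplicity_gt_zero_iff[of p t] pt t1 p(1) by auto
    then have k1: "k \<ge> 1" unfolding k_def by simp
    have y1: "y \<ge> 1" using y t1 by (cases y) auto
    define \<tau> where "\<tau> = y mod d"
    have yt: "[y = \<tau>] (mod d)" by (simp add: \<tau>_def cong_def)
    have "\<tau> < d" using d by (simp add: \<tau>_def)
    moreover have "\<not> p dvd \<tau>"
    proof
      assume "p dvd \<tau>"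
      have "[y = \<tau>] (mod p)" using yt p(2) by (rule cong_dvd_modulus_nat)
      then show False using \<open>p dvd \<tau>\<close> y(2) cong_dvd_iff by blast
    qed
    ultimately have tD: "\<tau> \<in> D" by (simp add: D_def)
    have "[p^k * \<tau> = p^k * y] (mod d)" using yt by (intro cong_scalar_left) (rule cong_sym)
    then have "[p^k * \<tau> = \<sigma>] (mod d)" using tc y(1) unfolding k_def[symmetric]
      by (metis cong_trans)
    then have "k \<in> Kset d p \<sigma> \<tau>" using k1 by (simp add: Kset_def)
    moreover have "y \<in> Tc d \<tau>" using y1 yt by (simp add: Tc_def)
    ultimately have "t \<in> W \<tau>" unfolding W_def using y(1) k_def by force
    then show "t \<in> (\<Union>\<tau>\<in>D. W \<tau>)" using tD by blast
  next
    fix t assume "t \<in> (\<Union>\<tau>\<in>D. W \<tau>)"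
    then obtain \<tau> k s where ts: "\<tau> \<in> D" "k \<in> Kset d p \<sigma> \<tau>" "s \<in> Tc d \<tau>" "t = p^k * s"
      by (auto simp: W_def)
    have s1: "s \<ge> 1" and sc: "[s = \<tau>] (mod d)" using ts by (auto simp: Tc_def)
    have kc: "[p^k * \<tau> = \<sigma>] (mod d)" using ts by (simp add: Kset_def)
    have "[p^k * s = p^k * \<tau>] (mod d)" using sc by (rule cong_scalar_left)
    then have "[t = \<sigma>] (mod d)" using kc ts(4) by (metis cong_trans)
    moreover have "t \<ge> 1" using ts(4) s1 p0 by simp
    ultimately show "t \<in> Tc d \<sigma>" by (simp add: Tc_def)
  qed
  have disj: "W \<tau> \<inter> W \<tau>' = {}" if "\<tau> \<in> D" "\<tau>' \<in> D" "\<tau> \<noteq> \<tau>'" for \<tau> \<tau>'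
  proof (rule ccontr)
    assume "W \<tau> \<inter> W \<tau>' \<noteq> {}"
    then obtain k s k' s' where A: "k \<in> Kset d p \<sigma> \<tau>" "s \<in> Tc d \<tau>" "k' \<in> Kset d p \<sigma> \<tau>'" "s' \<in> Tc d \<tau>'"
      and eq: "p^k * s = p^k' * s'" by (auto simp: W_def)
    have "\<not> p dvd s" "\<not> p dvd s'" using nd that A by auto
    then have inj: "inj_on (\<lambda>(k,s). p^k * s) (UNIV \<times> {s, s'})" by (intro pk_inj[OF p(1)]) auto
    have "(k,s) = (k',s')" using inj_onD[OF inj, of "(k,s)" "(k',s')"] eq by simp
    then have ss: "s = s'" by simp
    have c1: "[\<tau> = s] (mod d)" using A(2) by (simp add: Tc_def cong_sym_eq)
    have c2: "[s' = \<tau>'] (mod d)" using A(4) by (simp add: Tc_def)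
    have "[\<tau> = \<tau>'] (mod d)" using cong_trans[OF c1[unfolded ss] c2] .
    moreover have "\<tau> < d" "\<tau>' < d" using that by (auto simp: D_def)
    ultimately have "\<tau> = \<tau>'" by (rule cong_less_modulus_unique_nat)
    then show False using that by simp
  qed
  have "X d \<sigma> = infsum rfun (\<Union>\<tau>\<in>D. W \<tau>)" unfolding X_def cover ..
  also have "\<dots> = (\<Sum>\<tau>\<in>D. infsum rfun (W \<tau>))"
    by (rule sum_infsum[symmetric]) (use finD disj rfun_summable in auto)
  also have "\<dots> = (\<Sum>\<tau>\<in>D. coef d p \<sigma> \<tau> * X d \<tau>)"
  proof (rule sum.cong[OF refl])
    fix \<tau> assume "\<tau> \<in> D"
    then show "infsum rfun (W \<tau>) = coef d p \<sigma> \<tau> * X d \<tau>"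
      unfolding W_def coef_def X_def using nd by (intro infsum_pk_product p(1)) auto
  qed
  finally show ?thesis unfolding D_def .
qed


definition Rd :: "nat \<Rightarrow> nat set" where
  "Rd d = {\<beta>. \<beta> < d \<and> coprime \<beta> d}"

lemma finite_Rd: "finite (Rd d)"
  unfolding Rd_def by (rule finite_subset[of _ "{..<d}"]) auto

definition good :: "nat \<Rightarrow> (nat \<Rightarrow> real) \<Rightarrow> nat \<Rightarrow> bool" where
  "good d c \<sigma> \<longleftrightarrow> (\<forall>\<beta>\<in>Rd d. c \<beta> \<in> \<rat> \<and> c \<beta> \<ge> 0) \<and> X d \<sigma> = (\<Sum>\<beta>\<in>Rd d. c \<beta> * X d \<beta>)"

lemma gcd_decrease:
  assumes d: "d \<ge> 1" and p: "prime p" "p dvd d" "p dvd \<sigma>" and \<tau>: "\<not> p dvd \<tau>"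
    and c: "coef d p \<sigma> \<tau> \<noteq> 0"
  shows "gcd \<tau> d < gcd \<sigma> d"
proof -
  have "Kset d p \<sigma> \<tau> \<noteq> {}" using c unfolding coef_def by auto
  then obtain k where k: "[p^k * \<tau> = \<sigma>] (mod d)" by (auto simp: Kset_def)
  define g where "g = gcd \<tau> d"
  have "g dvd p^k * \<tau>" by (simp add: g_def)
  moreover have "[p^k * \<tau> = \<sigma>] (mod g)" using k by (rule cong_dvd_modulus_nat) (simp add: g_def)
  ultimately have "g dvd \<sigma>" using cong_dvd_iff by blast
  then have gd: "g dvd gcd \<sigma> d" by (simp add: g_def)
  have pos: "gcd \<sigma> d > 0" using d by simp
  have "g \<le> gcd \<sigma> d" using gd pos by (rule dvd_imp_le)
  moreover have "g \<noteq> gcd \<sigma> d"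
  proof
    assume "g = gcd \<sigma> d"
    then have "p dvd g" using p by simp
    then show False using \<tau> by (simp add: g_def)
  qed
  ultimately show ?thesis by (simp add: g_def)
qed

lemma span:
  assumes d: "d \<ge> 1"
  shows "\<sigma> < d \<Longrightarrow> \<exists>c. good d c \<sigma>"
proof (induction "gcd \<sigma> d" arbitrary: \<sigma> rule: less_induct)
  case less
  show ?case
  proof (cases "coprime \<sigma> d")
    case True
    then have sR: "\<sigma> \<in> Rd d" using less.prems by (simp add: Rd_def)
    define c where "c \<beta> = (if \<beta> = \<sigma> then 1 else 0 :: real)" for \<beta>
    have "(\<Sum>\<beta>\<in>Rd d. c \<beta> * X d \<beta>) = (\<Sum>\<beta>\<in>Rd d. if \<beta> = \<sigma> then X d \<beta> else 0)"
      by (intro sum.cong) (auto simp: c_def)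
    also have "\<dots> = X d \<sigma>" using sR finite_Rd by (simp add: sum.delta)
    finally have "good d c \<sigma>" unfolding good_def by (auto simp: c_def)
    then show ?thesis by blast
  next
    case False
    then have "gcd \<sigma> d \<noteq> 1" using coprime_iff_gcd_eq_1 by blast
    then obtain p where p: "prime p" "p dvd gcd \<sigma> d" using prime_factor_nat[of "gcd \<sigma> d"] by blast
    then have pd: "p dvd d" and ps: "p dvd \<sigma>" by auto
    define D where "D = {\<tau>. \<tau> < d \<and> \<not> p dvd \<tau>}"
    have finD: "finite D" unfolding D_def by (rule finite_subset[of _ "{..<d}"]) auto
    have peq: "X d \<sigma> = (\<Sum>\<tau>\<in>D. coef d p \<sigma> \<tau> * X d \<tau>)"
      unfolding D_def by (rule peel[OF d p(1) pd ps])
    define C where "C \<tau> = (SOME c. good d c \<tau>)" for \<tau>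
    have Cgood: "good d (C \<tau>) \<tau>" if "\<tau> \<in> D" "coef d p \<sigma> \<tau> \<noteq> 0" for \<tau>
    proof -
      have "gcd \<tau> d < gcd \<sigma> d" using that by (intro gcd_decrease[OF d p(1) pd ps]) (auto simp: D_def)
      moreover have "\<tau> < d" using that by (simp add: D_def)
      ultimately have "\<exists>c. good d c \<tau>" by (rule less.hyps)
      then show ?thesis unfolding C_def by (rule someI_ex)
    qed
    define c where "c \<beta> = (\<Sum>\<tau>\<in>D. coef d p \<sigma> \<tau> * C \<tau> \<beta>)" for \<beta>
    have trm: "coef d p \<sigma> \<tau> * C \<tau> \<beta> \<in> \<rat> \<and> coef d p \<sigma> \<tau> * C \<tau> \<beta> \<ge> 0"
      if "\<tau> \<in> D" "\<beta> \<in> Rd d" for \<tau> \<beta>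
    proof (cases "coef d p \<sigma> \<tau> = 0")
      case False
      then have "C \<tau> \<beta> \<in> \<rat>" "C \<tau> \<beta> \<ge> 0" using Cgood[OF that(1) False] that(2) by (auto simp: good_def)
      then show ?thesis using coef_rat[OF d p(1)] coef_nonneg by (auto intro: Rats_mult)
    qed simp
    have "X d \<sigma> = (\<Sum>\<tau>\<in>D. (\<Sum>\<beta>\<in>Rd d. coef d p \<sigma> \<tau> * C \<tau> \<beta> * X d \<beta>))"
      unfolding peq
    proof (rule sum.cong[OF refl])
      fix \<tau> assume t: "\<tau> \<in> D"
      show "coef d p \<sigma> \<tau> * X d \<tau> = (\<Sum>\<beta>\<in>Rd d. coef d p \<sigma> \<tau> * C \<tau> \<beta> * X d \<beta>)"
      proof (cases "coef d p \<sigma> \<tau> = 0")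
        case False
        then have "X d \<tau> = (\<Sum>\<beta>\<in>Rd d. C \<tau> \<beta> * X d \<beta>)" using Cgood[OF t False] by (simp add: good_def)
        then show ?thesis by (simp add: sum_distrib_left mult.assoc)
      qed simp
    qed
    also have "\<dots> = (\<Sum>\<beta>\<in>Rd d. c \<beta> * X d \<beta>)"
      unfolding c_def sum_distrib_right by (rule sum.swap)
    finally have "good d c \<sigma>" unfolding good_def c_def using trm finD
      by (auto intro!: Rats_sum sum_nonneg)
    then show ?thesis by blast
  qed
qed


lemma good_delta:
  assumes "\<sigma> \<in> Rd d"
  shows "good d (\<lambda>\<beta>. if \<beta> = \<sigma> then 1 else 0) \<sigma>"
proof -
  have "(\<Sum>\<beta>\<in>Rd d. (if \<beta> = \<sigma> then 1 else 0) * X d \<beta>) = (\<Sum>\<beta>\<in>Rd d. if \<beta> = \<sigma> then X d \<beta> else 0)"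
    by (intro sum.cong) auto
  also have "\<dots> = X d \<sigma>" using assms finite_Rd by (simp add: sum.delta)
  finally show ?thesis unfolding good_def by auto
qed

lemma rho_X:
  assumes d: "d \<ge> 1"
  shows "rho a d = artinA * X d (nat (a mod int d))"
proof -
  define s where "s = nat (a mod int d)"
  have dpos: "int d > 0" using d by simp
  have s: "int s = a mod int d" "s < d" using dpos by (auto simp: s_def nat_less_iff)
  have "{t. t \<ge> 1 \<and> [int t = a] (mod int d)} = Tc d s"
  proof -
    have "[int t = a] (mod int d) \<longleftrightarrow> [t = s] (mod d)" for t
    proof -
      have "[int t = a] (mod int d) \<longleftrightarrow> int t mod int d = a mod int d" by (simp add: cong_def)
      also have "\<dots> \<longleftrightarrow> int (t mod d) = int s" by (simp add: zmod_int s(1))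
      also have "\<dots> \<longleftrightarrow> t mod d = s mod d" using s(2) by simp
      also have "\<dots> \<longleftrightarrow> [t = s] (mod d)" by (simp add: cong_def)
      finally show ?thesis .
    qed
    then show ?thesis by (auto simp: Tc_def)
  qed
  then show ?thesis unfolding rho_def X_def s_def by simp
qed

lemma sum_X:
  assumes d: "d \<ge> 1"
  shows "(\<Sum>\<sigma><d. X d \<sigma>) = infsum rfun {t. t \<ge> 1}"
proof -
  have U: "{t. t \<ge> 1} = (\<Union>\<sigma>\<in>{..<d}. Tc d \<sigma>)"
  proof (intro equalityI subsetI)
    fix t :: nat assume "t \<in> {t. t \<ge> 1}"
    then have "t \<in> Tc d (t mod d)" by (simp add: Tc_def cong_def)
    moreover have "t mod d < d" using d by simp
    ultimately show "t \<in> (\<Union>\<sigma>\<in>{..<d}. Tc d \<sigma>)" by blast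
  qed (auto simp: Tc_def)
  have disj: "Tc d \<sigma> \<inter> Tc d \<sigma>' = {}" if "\<sigma> \<in> {..<d}" "\<sigma>' \<in> {..<d}" "\<sigma> \<noteq> \<sigma>'" for \<sigma> \<sigma>'
  proof (rule ccontr)
    assume "Tc d \<sigma> \<inter> Tc d \<sigma>' \<noteq> {}"
    then obtain t where "[t = \<sigma>] (mod d)" "[t = \<sigma>'] (mod d)" by (auto simp: Tc_def)
    then have "[\<sigma> = \<sigma>'] (mod d)" by (metis cong_sym cong_trans)
    then have "\<sigma> = \<sigma>'" using that by (auto intro: cong_less_modulus_unique_nat)
    then show False using that by simp
  qed
  show ?thesis unfolding X_def U
    by (rule sum_infsum) (use disj rfun_summable in auto)
qed

lemma card_Rd:
  assumes "d \<ge> 1"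
  shows "card (Rd d) = totient d"
proof (cases "d = 1")
  case True
  then have "Rd d = {0}" by (auto simp: Rd_def)
  then show ?thesis using True by simp
next
  case False
  have "Rd d = totatives d"
  proof (intro equalityI subsetI)
    fix b assume b: "b \<in> Rd d"
    then have "b \<noteq> 0" using False by (metis Rd_def mem_Collect_eq coprime_0_left_iff dvd_1_iff_1 One_nat_def)
    then show "b \<in> totatives d" using b by (auto simp: Rd_def totatives_def)
  next
    fix b assume b: "b \<in> totatives d"
    then have "b \<noteq> d" using False by (auto simp: totatives_def)
    then show "b \<in> Rd d" using b by (auto simp: Rd_def totatives_def)
  qed
  then show ?thesis by (simp add: totient_def)
qed

lemma Qring_sum: "finite A \<Longrightarrow> (\<And>x. x \<in> A \<Longrightarrow> f x \<in> Qring S) \<Longrightarrow> sum f A \<in> Qring S"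
proof (induction A rule: finite_induct)
  case empty
  then show ?case by (simp add: Qring.rat)
next
  case (insert x A)
  then show ?case by (simp add: Qring.add)
qed

lemma Qring_ratmul: "q \<in> \<rat> \<Longrightarrow> x \<in> Qring S \<Longrightarrow> q * x \<in> Qring S"
  by (rule Qring.mult[OF Qring.rat])

theorem mainTheorem10:
  fixes d :: nat and \<alpha> :: "nat \<Rightarrow> int" and a :: int
  assumes "d \<ge> 1"
    and "\<forall>i\<in>{1..totient d}. coprime (\<alpha> i) (int d)"
    and "\<forall>i\<in>{1..totient d}. \<forall>j\<in>{1..totient d}. [\<alpha> i = \<alpha> j] (mod int d) \<longrightarrow> i = j"
  shows "rho a d \<in> Qring ((\<lambda>i. rho (\<alpha> i) d) ` {1..totient d - 1})"
proof -
  note d = assms(1)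
  define \<phi> where "\<phi> = totient d"
  define G where "G = (\<lambda>i. rho (\<alpha> i) d) ` {1..\<phi> - 1}"
  define m where "m i = nat (\<alpha> i mod int d)" for i
  define Y where "Y \<beta> = artinA * X d \<beta>" for \<beta>
  have phi1: "\<phi> \<ge> 1" using d by (simp add: \<phi>_def Suc_le_eq)
  have dpos: "int d > 0" using d by simp
  have mR: "m i \<in> Rd d" if "i \<in> {1..\<phi>}" for i
  proof -
    have "coprime (\<alpha> i) (int d)" using assms(2) that by (simp add: \<phi>_def)
    then have "coprime (\<alpha> i mod int d) (int d)" using dpos by simp
    moreover have "\<alpha> i mod int d \<ge> 0" using dpos by simp
    ultimately have "coprime (int (m i)) (int d)" by (simp add: m_def)
    then have "coprime (m i) d" by simp
    moreover have "m i < d" using dpos by (simp add: m_def nat_less_iff)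
    ultimately show ?thesis by (simp add: Rd_def)
  qed
  have minj: "inj_on m {1..\<phi>}"
  proof (rule inj_onI)
    fix i j assume ij: "i \<in> {1..\<phi>}" "j \<in> {1..\<phi>}" "m i = m j"
    moreover have "\<alpha> i mod int d \<ge> 0" "\<alpha> j mod int d \<ge> 0" using dpos by auto
    ultimately have "\<alpha> i mod int d = \<alpha> j mod int d" by (simp add: m_def eq_nat_nat_iff)
    then have "[\<alpha> i = \<alpha> j] (mod int d)" by (simp add: cong_def)
    then show "i = j" using assms(3) ij by (auto simp: \<phi>_def)
  qed
  have mimg: "m ` {1..\<phi>} = Rd d"
  proof (rule card_subset_eq[OF finite_Rd])
    show "m ` {1..\<phi>} \<subseteq> Rd d" using mR by auto
    show "card (m ` {1..\<phi>}) = card (Rd d)" using card_image[OF minj] card_Rd[OF d] by (simp add: \<phi>_def)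
  qed
  have rhom: "rho (\<alpha> i) d = Y (m i)" for i using rho_X[OF d] by (simp add: Y_def m_def)
  define \<beta>0 where "\<beta>0 = m \<phi>"
  have b0R: "\<beta>0 \<in> Rd d" using mR phi1 by (simp add: \<beta>0_def)
  have YG: "Y \<beta> \<in> Qring G" if "\<beta> \<in> Rd d" "\<beta> \<noteq> \<beta>0" for \<beta>
  proof -
    have "\<beta> \<in> m ` {1..\<phi>}" using that(1) mimg by simp
    then obtain i where i: "i \<in> {1..\<phi>}" "\<beta> = m i" by (rule imageE) simp
    then have "i \<noteq> \<phi>" using that by (auto simp: \<beta>0_def)
    then have "i \<in> {1..\<phi> - 1}" using i by auto
    moreover have "Y \<beta> = rho (\<alpha> i) d" using rhom i by simp
    ultimately have "Y \<beta> \<in> G" unfolding G_def by (rule rev_image_eqI)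
    then show ?thesis by (rule Qring.gen)
  qed
  define CC where "CC \<sigma> = (if \<sigma> \<in> Rd d then (\<lambda>\<beta>. if \<beta> = \<sigma> then 1 else 0) else (SOME c. good d c \<sigma>))" for \<sigma>
  have CCgood: "good d (CC \<sigma>) \<sigma>" if "\<sigma> < d" for \<sigma>
  proof (cases "\<sigma> \<in> Rd d")
    case True
    then show ?thesis using good_delta[OF True] by (simp add: CC_def)
  next
    case False
    have "\<exists>c. good d c \<sigma>" using span[OF d that] .
    then have "good d (SOME c. good d c \<sigma>) \<sigma>" by (rule someI_ex)
    then show ?thesis using False unfolding CC_def by simp
  qed
  have Yrep: "Y \<sigma> = (\<Sum>\<beta>\<in>Rd d. CC \<sigma> \<beta> * Y \<beta>)" if "\<sigma> < d" for \<sigma>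
    using CCgood[OF that] unfolding good_def Y_def by (simp add: sum_distrib_left mult.left_commute)
  define Ct where "Ct \<beta> = (\<Sum>\<sigma><d. CC \<sigma> \<beta>)" for \<beta>
  have Ct_rat: "Ct \<beta> \<in> \<rat>" if "\<beta> \<in> Rd d" for \<beta>
    unfolding Ct_def using CCgood that by (intro Rats_sum) (auto simp: good_def)
  have Ct_ge1: "Ct \<beta> \<ge> 1" if "\<beta> \<in> Rd d" for \<beta>
  proof -
    have "\<beta> < d" using that by (simp add: Rd_def)
    have "CC \<beta> \<beta> \<le> Ct \<beta>" unfolding Ct_def
      using CCgood that \<open>\<beta> < d\<close> by (intro member_le_sum) (auto simp: good_def)
    moreover have "CC \<beta> \<beta> = 1" using that by (simp add: CC_def)
    ultimately show ?thesis by simp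
  qed
  have tot: "(\<Sum>\<beta>\<in>Rd d. Ct \<beta> * Y \<beta>) = 1"
  proof -
    have "(\<Sum>\<beta>\<in>Rd d. Ct \<beta> * Y \<beta>) = (\<Sum>\<sigma><d. \<Sum>\<beta>\<in>Rd d. CC \<sigma> \<beta> * Y \<beta>)"
      unfolding Ct_def sum_distrib_right by (rule sum.swap)
    also have "\<dots> = (\<Sum>\<sigma><d. Y \<sigma>)" using Yrep by simp
    also have "\<dots> = artinA * infsum rfun {t. t \<ge> 1}"
      unfolding Y_def sum_distrib_left[symmetric] sum_X[OF d] ..
    also have "\<dots> = 1" by (rule artin_S)
    finally show ?thesis .
  qed
  have Yb0: "Y \<beta>0 \<in> Qring G"
  proof -
    have "1 = Ct \<beta>0 * Y \<beta>0 + (\<Sum>\<beta>\<in>Rd d - {\<beta>0}. Ct \<beta> * Y \<beta>)"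
      using tot b0R finite_Rd by (simp add: sum.remove)
    moreover have "Ct \<beta>0 \<noteq> 0" using Ct_ge1[OF b0R] by simp
    ultimately have e: "Y \<beta>0 = (1 / Ct \<beta>0) * (1 + (-1) * (\<Sum>\<beta>\<in>Rd d - {\<beta>0}. Ct \<beta> * Y \<beta>))"
      by (simp add: field_simps)
    have h: "(\<Sum>\<beta>\<in>Rd d - {\<beta>0}. Ct \<beta> * Y \<beta>) \<in> Qring G"
      using finite_Rd by (intro Qring_sum Qring_ratmul Ct_rat YG) auto
    have "1 + (-1) * (\<Sum>\<beta>\<in>Rd d - {\<beta>0}. Ct \<beta> * Y \<beta>) \<in> Qring G"
      by (rule Qring.add[OF Qring.rat Qring_ratmul[OF _ h]]) auto
    then show ?thesis unfolding e using Ct_rat[OF b0R] by (intro Qring_ratmul) auto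
  qed
  have Yall: "Y \<beta> \<in> Qring G" if "\<beta> \<in> Rd d" for \<beta>
    using YG Yb0 that by (cases "\<beta> = \<beta>0") auto
  define \<sigma>a where "\<sigma>a = nat (a mod int d)"
  have sa: "\<sigma>a < d" using dpos by (simp add: \<sigma>a_def nat_less_iff)
  have "rho a d = Y \<sigma>a" using rho_X[OF d] by (simp add: Y_def \<sigma>a_def)
  also have "\<dots> = (\<Sum>\<beta>\<in>Rd d. CC \<sigma>a \<beta> * Y \<beta>)" by (rule Yrep[OF sa])
  also have "\<dots> \<in> Qring G"
    using finite_Rd CCgood[OF sa] Yall by (intro Qring_sum Qring_ratmul) (auto simp: good_def)
  finally show ?thesis unfolding G_def \<phi>_def .
qed

end
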